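(* Let $M$ be an $8$-dimensional Riemannian manifold, $\xi$ a complex line bundle over $M$ with Hermitian connection, $\eta$ a rank two real oriented Euclidean vector bundle over $M$ with Euclidean connection $\nabla^\eta$, and $a,b$ integers. Set $A=(\xi^{\otimes a})_{\mathbf R}\otimes\mathbf C$, $B=(\xi^{\otimes b})_{\mathbf R}\otimes\mathbf C$, $X=p_{1}(TM)-(a^{2}+2b^{2})p_{1}(\xi_{\mathbf{R}})$, $\Psi=2\cosh(\frac{b}{2}c)\cosh(\frac{1}{2}\overline{c})\widehat{A}(TM,\nabla^{TM})$, and \begin{align*} \overline{B_{0}^{1}}&=1,\qquad \overline{B_{1}^{1}}=-A+B+3\eta_{\mathbf{C}}-6,\\ \overline{B_{2}^{1}}&=\wedge^{2}(A)+\wedge^{2}(B)-A\otimes B-3A\otimes\eta_{\mathbf{C}}+3B\otimes\eta_{\mathbf{C}}+4\eta_{\mathbf{C}}\otimes\eta_{\mathbf{C}}+S^{2}(\eta_{\mathbf{C}})+T_{\mathbf{C}}M+6A-5B-17\eta_{\mathbf{C}}+7. \end{align*} Then \begin{align*} X\Big\{\frac{e^{\frac{1}{24}X}+1}{X}\,\Psi\,\mathrm{ch}\big(240\overline{B_{0}^{1}}+8\overline{B_{1}^{1}}-\overline{B_{2}^{1}}\big)+e^{\frac{1}{24}X}\,\Psi\,\mathrm{ch}(\overline{B_{0}^{1}})\Big\}^{(4)}=\Big\{\Psi\,\mathrm{ch}\big(240\overline{B_{0}^{1}}+8\overline{B_{1}^{1}}-\overline{B_{2}^{1}}\big)\Big\}^{(8)}.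 \end{align*}
   Context: $M$ is a Riemannian manifold with Levi-Civita connection $\nabla^{TM}$ and curvature $R^{TM}$; $T_{\mathbf C}M=TM\otimes\mathbf C$. $\widehat{A}(TM,\nabla^{TM})=\det^{1/2}\Big(\frac{\frac{\sqrt{-1}}{4\pi}R^{TM}}{\sinh(\frac{\sqrt{-1}}{4\pi}R^{TM})}\Big)$. For a Hermitian bundle $E$ with Hermitian connection, $\mathrm{ch}(E)=\mathrm{tr}[\exp(\frac{\sqrt{-1}}{2\pi}(\nabla^E)^2)]$, extended additively to formal $\mathbf Z$-linear combinations (an integer $N$ stands for the trivial bundle $\mathbf C^N$, $\mathrm{ch}(N)=N$); tensor products, exterior powers $\wedge^i$ and symmetric powers $S^i$ carry induced connections. $\{\omega\}^{(j)}$ is the degree-$j$ component of a form $\omega$. For an integer $m$, $(\xi^{\otimes m})_{\mathbf R}$ is the underlying rank two real oriented Euclidean bundle of $\xi^{\otimes m}$ (with $\xi^{\otimes m}$ for $m<0$ meaning $(\xi^* )^{\otimes |m|}$), with induced connection; $c=2\pi\sqrt{-1}u$ is the 2-form such that $\pm c$ are the formal Chern roots of $\xi_{\mathbf R}\otimes\mathbf C$, so $\pm mc$ are those of $(\xi^{\otimes m})_{\mathbf R}\otimes\mathbf C$. $\eta_{\mathbf C}=\eta\otimes\mathbf C$ and $\overline{c}=2\pi\sqrt{-1}\overline{u}$ is the 2-form such that $\pm\overline{c}$ are the formal Chern roots of $\eta_{\mathbf C}$. $p_1$ denotes the first Pontryagin form; in terms of formal Chern roots $\{\pm 2\pi\sqrt{-1}x_j\}$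 of $T_{\mathbf C}M$, $p_1(TM)=\sum_j(2\pi\sqrt{-1}x_j)^2$ and $p_1(\xi_{\mathbf R})=c^2$. Functions of $c,\overline c$ and $X$ are power series; the expression $X\{\frac{e^{X/24}+1}{X}F\}^{(4)}$ is understood formally, expanding $\frac{e^{X/24}+1}{X}=\frac{2}{X}+\frac1{24}+\frac{X}{1152}+\cdots$ with $X^{-1}$ a formal symbol of degree $-4$ satisfying $X\cdot X^{-1}=1$. *)

theory Defs
  imports "HOL-Computational_Algebra.Formal_Power_Series"
begin

text \<open>
Splitting-principle model of the algebra of characteristic forms.
Every characteristic form occurring in the statement is a power series in the
formal Chern roots (2-forms).  We encode such a form as a real formal power series
in a grading variable t: each formal Chern root r (a 2-form) is replaced by r*t,
so the degree-2k component of a form is the coefficient of t^k.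
A list of reals rs stands for the list of formal Chern roots of a complex bundle.
\<close>

definition ch_roots :: "real list \<Rightarrow> real fps" where
  "ch_roots rs = (\<Sum>r\<leftarrow>rs. fps_exp r)"

definition ch_wedge2 :: "real list \<Rightarrow> real fps" where
  "ch_wedge2 rs = (\<Sum>j<length rs. \<Sum>i<j. fps_exp (rs!i + rs!j))"

definition ch_sym2 :: "real list \<Rightarrow> real fps" where
  "ch_sym2 rs = (\<Sum>j<length rs. \<Sum>i\<le>j. fps_exp (rs!i + rs!j))"

text \<open>The power series sinh(s)/s evaluated at the root s (scaled by t).\<close>
definition fps_sinhc :: "real \<Rightarrow> real fps" where
  "fps_sinhc s = Abs_fps (\<lambda>n. if even n then s ^ n / fact (n + 1) else 0)"

definition fps_cosh :: "real \<Rightarrow> real fps" where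
  "fps_cosh s = (fps_exp s + fps_exp (- s)) / 2"

text \<open>A-hat form of TM, where \<open>\<plusminus>y_j\<close> are the formal Chern roots of T_C M
  (so det^(1/2) contributes one factor (y_j/2)/sinh(y_j/2) per pair).\<close>
definition Ahat :: "real list \<Rightarrow> real fps" where
  "Ahat ys = (\<Prod>y\<leftarrow>ys. inverse (fps_sinhc (y / 2)))"

definition roots_TCM :: "real list \<Rightarrow> real list" where
  "roots_TCM ys = ys @ map uminus ys"

definition roots_xiR :: "int \<Rightarrow> real \<Rightarrow> real list" where
  "roots_xiR m c = [of_int m * c, - (of_int m * c)]"

definition roots_etaC :: "real \<Rightarrow> real list" where
  "roots_etaC cb = [cb, - cb]"

definition form_deg :: "real fps \<Rightarrow> nat \<Rightarrow> real fps" where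
  "form_deg \<omega> j = (if even j then fps_const (fps_nth \<omega> (j div 2)) * fps_X ^ (j div 2) else 0)"

definition p1_TM :: "real list \<Rightarrow> real fps" where
  "p1_TM ys = fps_const (\<Sum>y\<leftarrow>ys. y ^ 2) * fps_X ^ 2"

definition p1_xiR :: "real \<Rightarrow> real fps" where
  "p1_xiR c = fps_const (c ^ 2) * fps_X ^ 2"

text \<open>
Formal meaning of  X { (e^(X/24)+1)/X * F }^(4)  for a degree-4 form X:
expanding (e^(X/24)+1)/X = 2 X^(-1) + H(X) with H(X) = sum_(n\<ge>1) X^(n-1)/(24^n n!),
and X^(-1) a formal symbol of degree -4 with X X^(-1) = 1, we get
X {2 X^(-1) F}^(4) = 2 X X^(-1) {F}^(8) = 2 {F}^(8), hence the value below.
\<close>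
definition H_series :: "real fps" where
  "H_series = Abs_fps (\<lambda>n. 1 / (24 ^ (n + 1) * fact (n + 1)))"

definition X_deg4_expX1_over_X :: "real fps \<Rightarrow> real fps \<Rightarrow> real fps" where
  "X_deg4_expX1_over_X X F =
     form_deg (2 * F) 8 + X * form_deg (fps_compose H_series X * F) 4"

definition fps_expX24 :: "real fps \<Rightarrow> real fps" where
  "fps_expX24 X = fps_compose (fps_exp (1 / 24)) X"

end

theory Submission
  imports Defs
begin
unbundle fps_syntax

lemma mult_nth1: "(f * g) $ 1 = f $ 0 * g $ 1 + f $ 1 * g $ 0"
  by (simp add: fps_mult_nth)
lemma mult_nth2: "(f * g) $ 2 = f $ 0 * g $ 2 + f $ 1 * g $ 1 + f $ 2 * g $ 0"
  by (simp add: fps_mult_nth numeral_eq_Suc atLeast0AtMost)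
lemma mult_nth3: "(f * g) $ 3 = f $ 0 * g $ 3 + f $ 1 * g $ 2 + f $ 2 * g $ 1 + f $ 3 * g $ 0"
  by (simp add: fps_mult_nth numeral_eq_Suc atLeast0AtMost)
lemma mult_nth4: "(f * g) $ 4 = f $ 0 * g $ 4 + f $ 1 * g $ 3 + f $ 2 * g $ 2 + f $ 3 * g $ 1 + f $ 4 * g $ 0"
  by (simp add: fps_mult_nth numeral_eq_Suc atLeast0AtMost)

lemma div2_nth: "((f::real fps) / 2) $ n = f $ n / 2"
proof -
  have "(2::real fps) = fps_const 2" by (rule numeral_fps_const)
  then have "f / 2 = f * fps_const (1/2)"
    by (simp add: fps_divide_unit numeral_fps_const fps_const_inverse)
  then show ?thesis by simp
qed

lemma cosh_nth: "fps_cosh s $ n = (s ^ n + (- s) ^ n) / fact n / 2"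
  unfolding fps_cosh_def div2_nth by (simp add: add_divide_distrib)

lemma sinhc_nth: "fps_sinhc s $ n = (if even n then s ^ n / fact (n + 1) else 0)"
  unfolding fps_sinhc_def by simp

lemma hinv:
  fixes s :: real
  defines "g \<equiv> inverse (fps_sinhc s)"
  shows "g $ 0 = 1" "g $ 1 = 0" "g $ 2 = - (s ^ 2) / 6" "g $ 3 = 0" "g $ 4 = 7 * s ^ 4 / 360"
proof -
  have f0: "fps_sinhc s $ 0 = 1" by (simp add: sinhc_nth)
  have f1: "fps_sinhc s $ 1 = 0" by (simp add: sinhc_nth)
  have f2: "fps_sinhc s $ 2 = s ^ 2 / 6" by (simp add: sinhc_nth fact_numeral)
  have f3: "fps_sinhc s $ 3 = 0" by (simp add: sinhc_nth)
  have f4: "fps_sinhc s $ 4 = s ^ 4 / 120" by (simp add: sinhc_nth fact_numeral)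
  have gf: "g * fps_sinhc s = 1" unfolding g_def using f0 by (intro inverse_mult_eq_1) simp
  show g0: "g $ 0 = 1" unfolding g_def using f0 by simp
  have e1: "(g * fps_sinhc s) $ 1 = 0" "(g * fps_sinhc s) $ 2 = 0" "(g * fps_sinhc s) $ 3 = 0"
     "(g * fps_sinhc s) $ 4 = 0" unfolding gf by simp_all
  show g1: "g $ 1 = 0" using e1(1) unfolding mult_nth1 f0 f1 g0 by simp
  show g2: "g $ 2 = - (s ^ 2) / 6" using e1(2) unfolding mult_nth2 f0 f1 f2 g0 g1 by simp
  show g3: "g $ 3 = 0" using e1(3) unfolding mult_nth3 f0 f1 f2 f3 g0 g1 g2 by simp
  show "g $ 4 = 7 * s ^ 4 / 360" using e1(4) unfolding mult_nth4 f0 f1 f2 f3 f4 g0 g1 g2 g3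
    by (simp add: field_simps) 
qed


lemma hinv1': "inverse (fps_sinhc s) $ Suc 0 = 0"
  using hinv(2) by simp

lemma num_mult_nth: "(numeral k * (f::real fps)) $ n = numeral k * f $ n"
  by (simp add: numeral_fps_const)

lemma exp_nths: "fps_exp (r::real) $ 0 = 1" "fps_exp r $ 1 = r" "fps_exp r $ 2 = r^2/2"
  "fps_exp r $ 3 = r^3/6" "fps_exp r $ 4 = r^4/24"
  by (simp_all add: fact_numeral)

lemma Ahat_nth:
  fixes y1 y2 y3 y4 :: real
  shows "Ahat [y1,y2,y3,y4] $ 0 = 1" "Ahat [y1,y2,y3,y4] $ 1 = 0"
    "Ahat [y1,y2,y3,y4] $ 2 = - (y1^2+y2^2+y3^2+y4^2) / 24"
    "Ahat [y1,y2,y3,y4] $ 3 = 0"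
    "Ahat [y1,y2,y3,y4] $ 4 = (2*(y1^4+y2^4+y3^4+y4^4) + 5*(y1^2+y2^2+y3^2+y4^2)^2) / 5760"
  unfolding Ahat_def
  apply (simp_all add: mult_nth1 mult_nth2 mult_nth3 mult_nth4 hinv hinv1' del: fps_inverse_nth_0)
  apply (simp_all add: field_simps)
  apply algebra
  done


lemma compose_nths:
  fixes a :: "real fps"
  assumes X: "X = fps_const x * fps_X ^ 2"
  shows "(a oo X) $ 0 = a $ 0" "(a oo X) $ 1 = 0" "(a oo X) $ 2 = a $ 1 * x"
proof -
  have p: "X ^ i = fps_const (x ^ i) * fps_X ^ (2 * i)" for i
    unfolding X by (simp add: power_mult_distrib fps_const_power power_mult)
  show "(a oo X) $ 0 = a $ 0" by simp
  show "(a oo X) $ 1 = 0" by (simp add: fps_compose_nth p fps_X_power_nth)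
  show "(a oo X) $ 2 = a $ 1 * x"
    by (simp add: fps_compose_nth p fps_X_power_nth numeral_eq_Suc atLeast0AtMost)
qed

lemma constX: "(fps_const (c::real) * fps_X ^ k) $ n = (if n = k then c else 0)"
  by (simp add: fps_X_power_nth)

lemma reduce:
  fixes X F P :: "real fps" and x :: real
  assumes X: "X = fps_const x * fps_X ^ 2"
  and eq: "F $ 4 + x * (F $ 2 / 24 + x * F $ 0 / 1152) + x * (P $ 2 + x * P $ 0 / 24) = 0"
  shows "X_deg4_expX1_over_X X F + X * form_deg (fps_expX24 X * P * 1) 4 = form_deg F 8"
proof -
  have H0: "H_series $ 0 = 1/24" and H1: "H_series $ 1 = 1/1152"
    by (simp_all add: H_series_def)
  have HX0: "(H_series oo X) $ 0 = 1/24" using H0 by simp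
  have HX1: "(H_series oo X) $ 1 = 0" by (rule compose_nths(2)[OF X])
  have HX2: "(H_series oo X) $ 2 = x / 1152" using compose_nths(3)[OF X] H1 by simp
  have E0: "fps_expX24 X $ 0 = 1" by (simp add: fps_expX24_def)
  have E1: "fps_expX24 X $ 1 = 0" unfolding fps_expX24_def by (rule compose_nths(2)[OF X])
  have E2: "fps_expX24 X $ 2 = x / 24" unfolding fps_expX24_def using compose_nths(3)[OF X] by simp
  have g: "((H_series oo X) * F) $ 2 = F $ 2 / 24 + x * F $ 0 / 1152"
    unfolding mult_nth2 HX0 HX1 HX2 by simp
  have e: "(fps_expX24 X * P) $ 2 = P $ 2 + x * P $ 0 / 24"
    unfolding mult_nth2 E0 E1 E2 by simp
  have fd4: "form_deg G 4 = fps_const (G $ 2) * fps_X ^ 2" for G by (simp add: form_deg_def)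
  have fd8: "form_deg G 8 = fps_const (G $ 4) * fps_X ^ 4" for G by (simp add: form_deg_def)
  have m: "(fps_const x * fps_X ^ 2) * (fps_const u * fps_X ^ 2) = fps_const (x * u) * fps_X ^ 4" for u
    by (simp add: algebra_simps flip: power_add fps_const_mult)
  show ?thesis
    unfolding X_deg4_expX1_over_X_def fd4 fd8 mult_1_right g e
    unfolding X m
    apply (rule fps_ext)
    apply (simp only: fps_add_nth constX num_mult_nth)
    using eq by (auto simp: algebra_simps num_mult_nth)
qed


lemma chxi: "ch_roots (roots_xiR m c) = fps_exp (of_int m * c) + fps_exp (- (of_int m * c))"
  by (simp add: ch_roots_def roots_xiR_def)
lemma chE: "ch_roots (roots_etaC e) = fps_exp e + fps_exp (- e)"
  by (simp add: ch_roots_def roots_etaC_def)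
lemma w2xi: "ch_wedge2 (roots_xiR m c) = 1"
  by (simp add: ch_wedge2_def roots_xiR_def lessThan_Suc numeral_eq_Suc)
lemma s2E: "ch_sym2 (roots_etaC e) = fps_exp (e + e) + 1 + fps_exp (- e + - e)"
  by (simp add: ch_sym2_def roots_etaC_def lessThan_Suc numeral_eq_Suc atMost_Suc)
lemma chT: "ch_roots (roots_TCM [y1,y2,y3,y4]) = fps_exp y1 + fps_exp y2 + fps_exp y3 + fps_exp y4
   + fps_exp (-y1) + fps_exp (-y2) + fps_exp (-y3) + fps_exp (-y4)"
  by (simp add: ch_roots_def roots_TCM_def add.assoc)


definition P :: "real \<Rightarrow> real fps" where "P r = fps_exp r + fps_exp (- r)"

lemma P_nth: "P r $ n = (r ^ n + (- r) ^ n) / fact n"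
  by (simp add: P_def add_divide_distrib)

lemma P_mult: "P r * P s = P (r + s) + P (r - s)"
  unfolding P_def by (simp add: algebra_simps flip: fps_exp_add_mult)

lemma Gform:
  fixes al be e :: real and T :: "real fps"
  shows "240 * 1 + 8 * (- P al + P be + 3 * P e - 6) -
     (1 + 1 - P al * P be - 3 * P al * P e + 3 * P be * P e + 4 * P e * P e
      + (P (e + e) + 1) + T + 6 * P al - 5 * P be - 17 * P e + 7)
   = 174 - 14 * P al + 13 * P be + 41 * P e + P (al + be) + P (al - be) + 3 * P (al + e) + 3 * P (al - e)
     - 3 * P (be + e) - 3 * P (be - e) - 5 * P (e + e) - T"
proof -
  have ee: "P e * P e = P (e + e) + 2"
    unfolding P_mult by (simp add: P_def)
  show ?thesis
    unfolding mult.assoc ee unfolding P_mult by (simp add: algebra_simps)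
qed


lemma Gnth:
  fixes al be e y1 y2 y3 y4 :: real
  defines "Gs \<equiv> 174 - 14 * P al + 13 * P be + 41 * P e + P (al + be) + P (al - be) + 3 * P (al + e) + 3 * P (al - e)
     - 3 * P (be + e) - 3 * P (be - e) - 5 * P (e + e) - (P y1 + P y2 + P y3 + P y4)"
  shows "Gs $ 0 = 240" "Gs $ 1 = 0" "Gs $ 2 = -6*al^2 + 9*be^2 + 21*e^2 - (y1^2+y2^2+y3^2+y4^2)"
    "Gs $ 3 = 0"
    "Gs $ 4 = (-6*al^4 + 9*be^4 - 39*e^4 + 12*al^2*be^2 + 36*al^2*e^2 - 36*be^2*e^2 - (y1^4+y2^4+y3^4+y4^4))/12"
  unfolding Gs_def
  by (simp_all add: P_nth fps_numeral_nth num_mult_nth fact_numeral; simp add: field_simps; algebra)+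


lemma cosh_nths: "fps_cosh s $ 0 = 1" "fps_cosh s $ 1 = 0" "fps_cosh s $ 2 = s^2/2"
  "fps_cosh s $ 3 = 0" "fps_cosh s $ 4 = s^4/24"
  by (simp_all add: cosh_nth fact_numeral)

lemma cosh_suc0: "fps_cosh s $ Suc 0 = 0" by (simp add: cosh_nth)

lemma Cnth:
  fixes s1 s2 :: real
  defines "C \<equiv> 2 * fps_cosh s1 * fps_cosh s2"
  shows "C $ 0 = 2" "C $ 1 = 0" "C $ 2 = s1^2 + s2^2" "C $ 3 = 0"
    "C $ 4 = s1^4/12 + s2^4/12 + s1^2*s2^2/2"
  unfolding C_def
  by (simp_all add: mult_nth1 mult_nth2 mult_nth3 mult_nth4 num_mult_nth cosh_nths cosh_suc0 fps_numeral_nth field_simps)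

lemma Psinth:
  fixes s1 s2 y1 y2 y3 y4 :: real
  defines "p \<equiv> y1^2+y2^2+y3^2+y4^2" and "q \<equiv> y1^4+y2^4+y3^4+y4^4"
  shows "(2 * fps_cosh s1 * fps_cosh s2 * Ahat [y1,y2,y3,y4]) $ 0 = 2"
    "(2 * fps_cosh s1 * fps_cosh s2 * Ahat [y1,y2,y3,y4]) $ 1 = 0"
    "(2 * fps_cosh s1 * fps_cosh s2 * Ahat [y1,y2,y3,y4]) $ 2 = 2 * (s1^2/2 + s2^2/2 - p/24)"
    "(2 * fps_cosh s1 * fps_cosh s2 * Ahat [y1,y2,y3,y4]) $ 3 = 0"
    "(2 * fps_cosh s1 * fps_cosh s2 * Ahat [y1,y2,y3,y4]) $ 4 = 2 * (s1^4/24 + s2^4/24 + s1^2*s2^2/4 - (s1^2+s2^2)*p/48 + (2*q+5*p^2)/5760)"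
proof -
  define C where "C = 2 * fps_cosh s1 * fps_cosh s2"
  define A where "A = Ahat [y1,y2,y3,y4]"
  note Cn = Cnth[of s1 s2, folded C_def]
  note An = Ahat_nth[of y1 y2 y3 y4, folded A_def, folded p_def q_def]
  show "(2 * fps_cosh s1 * fps_cosh s2 * Ahat [y1,y2,y3,y4]) $ 0 = 2"
    "(2 * fps_cosh s1 * fps_cosh s2 * Ahat [y1,y2,y3,y4]) $ 1 = 0"
    "(2 * fps_cosh s1 * fps_cosh s2 * Ahat [y1,y2,y3,y4]) $ 2 = 2 * (s1^2/2 + s2^2/2 - p/24)"
    "(2 * fps_cosh s1 * fps_cosh s2 * Ahat [y1,y2,y3,y4]) $ 3 = 0"
    "(2 * fps_cosh s1 * fps_cosh s2 * Ahat [y1,y2,y3,y4]) $ 4 = 2 * (s1^4/24 + s2^4/24 + s1^2*s2^2/4 - (s1^2+s2^2)*p/48 + (2*q+5*p^2)/5760)"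
    unfolding C_def[symmetric] A_def[symmetric] mult_nth1 mult_nth2 mult_nth3 mult_nth4 fps_mult_nth_0 Cn An
    by (simp_all add: field_simps)
qed


lemma scalar_id:
  fixes a b c cb p q :: real
  shows "let al = a * c; be = b * c; e = cb; s1 = b / 2 * c; s2 = 1/2 * cb;
     x = p - (a^2 + 2 * b^2) * c^2;
     P0 = 2; P1 = 0; P2 = 2 * (s1^2/2 + s2^2/2 - p/24); P3 = 0;
     P4 = 2 * (s1^4/24 + s2^4/24 + s1^2*s2^2/4 - (s1^2+s2^2)*p/48 + (2*q+5*p^2)/5760);
     G0 = 240; G1 = 0; G2 = -6*al^2 + 9*be^2 + 21*e^2 - p; G3 = 0;
     G4 = (-6*al^4 + 9*be^4 - 39*e^4 + 12*al^2*be^2 + 36*al^2*e^2 - 36*be^2*e^2 - q)/12;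
     F0 = P0 * G0; F2 = P0 * G2 + P1 * G1 + P2 * G0;
     F4 = P0 * G4 + P1 * G3 + P2 * G2 + P3 * G1 + P4 * G0
   in F4 + x * (F2 / 24 + x * F0 / 1152) + x * (P2 + x * P0 / 24) = 0"
  unfolding Let_def by (simp add: field_simps; algebra)


theorem theorem4p3:
  fixes y :: "real list" and c cb :: real and a b :: int
  assumes dim8: "length y = 4"
  shows "let chA = ch_roots (roots_xiR a c);
             chB = ch_roots (roots_xiR b c);
             chE = ch_roots (roots_etaC cb);
             X = p1_TM y - of_int (a ^ 2 + 2 * b ^ 2) * p1_xiR c;
             Psi = 2 * fps_cosh (of_int b / 2 * c) * fps_cosh (1 / 2 * cb) * Ahat y;
             chB0 = 1;
             chB1 = - chA + chB + 3 * chE - 6;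
             chB2 = ch_wedge2 (roots_xiR a c) + ch_wedge2 (roots_xiR b c) - chA * chB
                  - 3 * chA * chE + 3 * chB * chE + 4 * chE * chE
                  + ch_sym2 (roots_etaC cb) + ch_roots (roots_TCM y)
                  + 6 * chA - 5 * chB - 17 * chE + 7
         in X_deg4_expX1_over_X X (Psi * (240 * chB0 + 8 * chB1 - chB2))
              + X * form_deg (fps_expX24 X * Psi * chB0) 4
            = form_deg (Psi * (240 * chB0 + 8 * chB1 - chB2)) 8"
proof -
  obtain y1 y2 y3 y4 where y: "y = [y1,y2,y3,y4]"
  proof -
    from dim8 obtain y1 t1 where "y = y1 # t1" "length t1 = 3" by (cases y) auto
    moreover from this(2) obtain y2 t2 where "t1 = y2 # t2" "length t2 = 2" by (cases t1) auto
    moreover from this(2) obtain y3 t3 where "t2 = y3 # t3" "length t3 = 1" by (cases t2) auto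
    moreover from this(2) obtain y4 where "t3 = [y4]" by (cases t3) auto
    ultimately show ?thesis using that by blast
  qed
  define p where "p = y1^2+y2^2+y3^2+y4^2"
  define q where "q = y1^4+y2^4+y3^4+y4^4"
  define x where "x = p - (of_int a ^ 2 + 2 * of_int b ^ 2) * c^2"
  have X: "p1_TM y - of_int (a ^ 2 + 2 * b ^ 2) * p1_xiR c = fps_const x * fps_X ^ 2"
  proof -
    have k: "(of_int (a ^ 2 + 2 * b ^ 2) :: real fps) = fps_const (of_int a ^ 2 + 2 * of_int b ^ 2)"
      by (simp flip: fps_of_int)
    have m: "fps_const u * fps_X ^ 2 - fps_const v * (fps_const w * fps_X ^ 2) = fps_const (u - v * w) * (fps_X ^ 2 :: real fps)" for u v w
      by (simp add: algebra_simps flip: fps_const_mult fps_const_sub)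
    show ?thesis unfolding k p1_TM_def p1_xiR_def m unfolding x_def p_def y by (simp add: add.assoc)
  qed
  have cA: "ch_roots (roots_xiR m c) = P (of_int m * c)" for m by (simp add: chxi P_def)
  have cE: "ch_roots (roots_etaC cb) = P cb" by (simp add: chE P_def)
  have cS: "ch_sym2 (roots_etaC cb) = P (cb + cb) + 1" by (simp add: s2E P_def algebra_simps)
  have cT: "ch_roots (roots_TCM y) = P y1 + P y2 + P y3 + P y4" by (simp add: y chT P_def algebra_simps)
  define Gs where "Gs = 174 - 14 * P (of_int a * c) + 13 * P (of_int b * c) + 41 * P cb
     + P (of_int a * c + of_int b * c) + P (of_int a * c - of_int b * c) + 3 * P (of_int a * c + cb) + 3 * P (of_int a * c - cb)
     - 3 * P (of_int b * c + cb) - 3 * P (of_int b * c - cb) - 5 * P (cb + cb) - (P y1 + P y2 + P y3 + P y4)"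
  have Geq: "240 * 1 + 8 * (- ch_roots (roots_xiR a c) + ch_roots (roots_xiR b c) + 3 * ch_roots (roots_etaC cb) - 6) -
     (ch_wedge2 (roots_xiR a c) + ch_wedge2 (roots_xiR b c) - ch_roots (roots_xiR a c) * ch_roots (roots_xiR b c)
                  - 3 * ch_roots (roots_xiR a c) * ch_roots (roots_etaC cb) + 3 * ch_roots (roots_xiR b c) * ch_roots (roots_etaC cb) + 4 * ch_roots (roots_etaC cb) * ch_roots (roots_etaC cb)
                  + ch_sym2 (roots_etaC cb) + ch_roots (roots_TCM y)
                  + 6 * ch_roots (roots_xiR a c) - 5 * ch_roots (roots_xiR b c) - 17 * ch_roots (roots_etaC cb) + 7) = Gs"
    unfolding cA cE cS cT w2xi Gs_def by (rule Gform)
  note Gn = Gnth[of "of_int a * c" "of_int b * c" cb y1 y2 y3 y4, folded Gs_def, folded p_def q_def]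
  define Psi where "Psi = 2 * fps_cosh (of_int b / 2 * c) * fps_cosh (1 / 2 * cb) * Ahat y"
  have Pn: "Psi $ 0 = 2" "Psi $ 1 = 0" "Psi $ 2 = 2 * ((of_int b / 2 * c)^2/2 + (1 / 2 * cb)^2/2 - p/24)"
    "Psi $ 3 = 0"
    "Psi $ 4 = 2 * ((of_int b / 2 * c)^4/24 + (1 / 2 * cb)^4/24 + (of_int b / 2 * c)^2*(1 / 2 * cb)^2/4
       - ((of_int b / 2 * c)^2+(1 / 2 * cb)^2)*p/48 + (2*q+5*p^2)/5760)"
    unfolding Psi_def y p_def q_def by (rule Psinth)+
  have eq: "(Psi * Gs) $ 4 + x * ((Psi * Gs) $ 2 / 24 + x * (Psi * Gs) $ 0 / 1152) + x * (Psi $ 2 + x * Psi $ 0 / 24) = 0"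
    unfolding mult_nth2 mult_nth4 fps_mult_nth_0 Pn Gn x_def
    using scalar_id[where a="of_int a" and b="of_int b" and c=c and cb=cb and p=p and q=q] unfolding Let_def by simp
  show ?thesis
    unfolding Let_def Geq X Psi_def[symmetric]
    by (rule reduce[OF refl eq])
qed

end
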